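(* Let $f,g$ be complex-valued functions of two variables with $f\perp g$. Let $\{a_i\}_{i\in\mathbb{Z}},\{b_i\}_{i\in\mathbb{Z}},\{c_i\}_{i\in\mathbb{Z}},\{d_i\}_{i\in\mathbb{Z}}$ be sequences, and let $m,n\ge 0$ be integers such that $f(a_j,c_j),f(a_j,d_j),g(b_j,c_j),g(b_j,d_j)$ are all nonzero for $-n\le j\le m$. Then $$\sum_{k=-n}^{m} f(a_k,b_k)g(c_k,d_k)\frac{\prod_{j=1}^{k-1}f(a_j,c_j)}{\prod_{j=1}^{k}f(a_j,d_j)}\frac{\prod_{j=1}^{k-1}g(b_j,d_j)}{\prod_{j=1}^{k}g(b_j,c_j)} =\frac{\prod_{j=1}^{m}f(a_j,c_j)}{\prod_{j=1}^{m}f(a_j,d_j)}\frac{\prod_{j=1}^{m}g(b_j,d_j)}{\prod_{j=1}^{m}g(b_j,c_j)}-\frac{\prod_{j=-n}^{0}f(a_j,d_j)}{\prod_{j=-n}^{0}f(a_j,c_j)}\frac{\prod_{j=-n}^{0}g(b_j,c_j)}{\prod_{j=-n}^{0}g(b_j,d_j)}.$$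
   Context: $f\perp g$ means $g(u,v)f(z,w)-g(u,w)f(z,v)+g(v,w)f(z,u)=0$ for all $u,v,w,z$. Products over integer ranges follow the convention: $\prod_{j=k}^{m}A_j=A_kA_{k+1}\cdots A_m$ if $m\ge k$; $=1$ if $m=k-1$; $=(A_{m+1}A_{m+2}\cdots A_{k-1})^{-1}$ if $m\le k-2$. *)

theory Defs
  imports Complex_Main
begin

definition orth :: "('a \<Rightarrow> 'a \<Rightarrow> complex) \<Rightarrow> ('a \<Rightarrow> 'a \<Rightarrow> complex) \<Rightarrow> bool" where
  "orth f g \<longleftrightarrow> (\<forall>u v w z. g u v * f z w - g u w * f z v + g v w * f z u = 0)"

text \<open>Products over integer ranges with the paper's convention:
  k..m if m \<ge> k; 1 if m = k-1; inverse of product over m+1..k-1 if m \<le> k-2.\<close>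
definition gprod :: "(int \<Rightarrow> complex) \<Rightarrow> int \<Rightarrow> int \<Rightarrow> complex" where
  "gprod A k m = (if m \<ge> k then (\<Prod>j\<in>{k..m}. A j)
                  else if m = k - 1 then 1
                  else inverse (\<Prod>j\<in>{m+1..k-1}. A j))"

end

theory Submission
  imports Defs
begin

lemma gprod_step:
  assumes "A k \<noteq> 0"
  shows "gprod A 1 k = gprod A 1 (k - 1) * A k"
proof -
  consider "k \<ge> 2" | "k = 1" | "k = 0" | "k \<le> -1" by linarith
  then show ?thesis
  proof cases
    case 1
    then have "{1..k} = insert k {1..k-1}" by auto
    then show ?thesis using 1 by (simp add: gprod_def mult.commute)
  next
    case 2 then show ?thesis by (simp add: gprod_def)
  next
    case 3 then show ?thesis using assms by (simp add: gprod_def)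
  next
    case 4
    then have "{k..0} = insert k {k+1..0}" by auto
    then show ?thesis using 4 assms by (simp add: gprod_def)
  qed
qed

lemma gprod_nz:
  assumes "\<And>j. l \<le> j \<Longrightarrow> j \<le> m \<Longrightarrow> A j \<noteq> 0" "l \<le> 1" "0 \<le> m" "l - 1 \<le> k" "k \<le> m"
  shows "gprod A 1 k \<noteq> 0"
  using assms by (auto simp: gprod_def)

lemma tele:
  fixes h :: "int \<Rightarrow> complex"
  assumes "l - 1 \<le> m"
  shows "(\<Sum>k\<in>{l..m}. h k - h (k - 1)) = h m - h (l - 1)"
  using assms
proof (induction m rule: int_ge_induct)
  case base then show ?case by simp
next
  case (step i)
  have "{l..i+1} = insert (i+1) {l..i}" using step by auto
  then show ?case using step by simp
qed

theorem theorem3p1: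
  fixes f g :: "'a \<Rightarrow> 'a \<Rightarrow> complex"
    and a b c d :: "int \<Rightarrow> 'a"
    and m n :: int
  assumes "orth f g"
    and "m \<ge> 0" and "n \<ge> 0"
    and "\<And>j. - n \<le> j \<Longrightarrow> j \<le> m \<Longrightarrow>
           f (a j) (c j) \<noteq> 0 \<and> f (a j) (d j) \<noteq> 0 \<and> g (b j) (c j) \<noteq> 0 \<and> g (b j) (d j) \<noteq> 0"
  shows "(\<Sum>k\<in>{-n..m}. f (a k) (b k) * g (c k) (d k)
            * (gprod (\<lambda>j. f (a j) (c j)) 1 (k - 1) / gprod (\<lambda>j. f (a j) (d j)) 1 k)
            * (gprod (\<lambda>j. g (b j) (d j)) 1 (k - 1) / gprod (\<lambda>j. g (b j) (c j)) 1 k))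
       = (gprod (\<lambda>j. f (a j) (c j)) 1 m / gprod (\<lambda>j. f (a j) (d j)) 1 m)
           * (gprod (\<lambda>j. g (b j) (d j)) 1 m / gprod (\<lambda>j. g (b j) (c j)) 1 m)
         - (gprod (\<lambda>j. f (a j) (d j)) (- n) 0 / gprod (\<lambda>j. f (a j) (c j)) (- n) 0)
           * (gprod (\<lambda>j. g (b j) (c j)) (- n) 0 / gprod (\<lambda>j. g (b j) (d j)) (- n) 0)"
proof -
  define FC where "FC = gprod (\<lambda>j. f (a j) (c j)) 1"
  define FD where "FD = gprod (\<lambda>j. f (a j) (d j)) 1"
  define GC where "GC = gprod (\<lambda>j. g (b j) (c j)) 1"
  define GD where "GD = gprod (\<lambda>j. g (b j) (d j)) 1"
  define T where "T k = (FC k / FD k) * (GD k / GC k)" for k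
  have nz: "FC k \<noteq> 0 \<and> FD k \<noteq> 0 \<and> GC k \<noteq> 0 \<and> GD k \<noteq> 0" if "-n-1 \<le> k" "k \<le> m" for k
    unfolding FC_def FD_def GC_def GD_def
    using that assms(2,3) gprod_nz[of "-n" m _ k] assms(4) by (smt (verit))
  have orth: "f (a k) (b k) * g (c k) (d k) = f (a k) (c k) * g (b k) (d k) - f (a k) (d k) * g (b k) (c k)" for k
    using assms(1) unfolding orth_def
  proof -
    have "g (b k) (c k) * f (a k) (d k) - g (b k) (d k) * f (a k) (c k) + g (c k) (d k) * f (a k) (b k) = 0"
      using assms(1) unfolding orth_def by blast
    then show ?thesis by (simp add: algebra_simps eq_diff_eq)
  qed
  have tm: "f (a k) (b k) * g (c k) (d k) * (FC (k - 1) / FD k) * (GD (k - 1) / GC k) = T k - T (k - 1)"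
    if k: "k \<in> {-n..m}" for k
  proof -
    have nzk: "f (a k) (c k) \<noteq> 0 \<and> f (a k) (d k) \<noteq> 0 \<and> g (b k) (c k) \<noteq> 0 \<and> g (b k) (d k) \<noteq> 0"
      using assms(4) k by auto
    have s1: "FC k = FC (k-1) * f (a k) (c k)" "FD k = FD (k-1) * f (a k) (d k)"
      "GC k = GC (k-1) * g (b k) (c k)" "GD k = GD (k-1) * g (b k) (d k)"
      unfolding FC_def FD_def GC_def GD_def using nzk by (auto intro: gprod_step)
    have n1: "FD (k-1) \<noteq> 0" "GC (k-1) \<noteq> 0" using nz[of "k-1"] k by auto
    show ?thesis unfolding T_def s1 orth using nzk n1
      by (simp add: field_simps)
  qed
  have "(\<Sum>k\<in>{-n..m}. f (a k) (b k) * g (c k) (d k)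
            * (gprod (\<lambda>j. f (a j) (c j)) 1 (k - 1) / gprod (\<lambda>j. f (a j) (d j)) 1 k)
            * (gprod (\<lambda>j. g (b j) (d j)) 1 (k - 1) / gprod (\<lambda>j. g (b j) (c j)) 1 k))
     = (\<Sum>k\<in>{-n..m}. T k - T (k - 1))"
    using tm unfolding FC_def FD_def GC_def GD_def by (intro sum.cong) auto
  also have "\<dots> = T m - T (-n - 1)" using tele[of "-n" m T] assms(2,3) by simp
  also have "T (-n - 1) = (gprod (\<lambda>j. f (a j) (d j)) (- n) 0 / gprod (\<lambda>j. f (a j) (c j)) (- n) 0)
           * (gprod (\<lambda>j. g (b j) (c j)) (- n) 0 / gprod (\<lambda>j. g (b j) (d j)) (- n) 0)"
    using assms(3) unfolding T_def FC_def FD_def GC_def GD_def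
    by (simp add: gprod_def divide_inverse mult.commute)
  finally show ?thesis unfolding T_def FC_def FD_def GC_def GD_def .
qed

end
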